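(* For $\alpha>0$ let $c_2(\alpha)=2\int_0^\infty \ln(z)G_\alpha(z)g_\alpha(z)\,dz$ and $\beta_0(\alpha)=\psi^{-1}(c_2(\alpha))-\alpha$. Then $\beta_0(\alpha)\in(0,\alpha)$, and, for estimating $H_S(\underline\theta)$ under squared error loss: (a) the generalized Bayes estimators $\delta_{\psi(\alpha+\beta)}(X_1,X_2)=\ln Z_2-\psi(\alpha+\beta)$ with $0\le\beta\le\beta_0(\alpha)$ are admissible within the class $\mathcal K_1$; (b) for $\beta\in(-\alpha,0)\cup(\beta_0(\alpha),\infty)$ the estimator $\delta_{\psi(\alpha+\beta)}$ is inadmissible; specifically, for $\beta\in(-\alpha,0)$ it is dominated by $\delta_{\psi(\alpha)}(X_1,X_2)=\ln Z_2-\psi(\alpha)$, and for $\beta>\beta_0(\alpha)$ it is dominated by $\delta_{c_2(\alpha)}(X_1,X_2)=\ln Z_2-c_2(\alpha)$.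
   Context: Fix a known $\alpha>0$. $X_1,X_2$ are independent, $X_i$ having density $f(x\mid\theta_i)=\frac{x^{\alpha-1}e^{-x/\theta_i}}{\Gamma(\alpha)\theta_i^{\alpha}}$, $x>0$, with unknown $\underline\theta=(\theta_1,\theta_2)\in\Theta=(0,\infty)^2$. $Z_1=\min\{X_1,X_2\}$, $Z_2=\max\{X_1,X_2\}$. $H_S(\underline\theta)=\ln\theta_1\, I(X_1\ge X_2)+\ln\theta_2\, I(X_1<X_2)$. $\psi$ is the digamma function (strictly increasing on $(0,\infty)$, with inverse $\psi^{-1}$); $G_\alpha,g_\alpha$ are the distribution function and density of the gamma distribution with shape $\alpha$, scale $1$. For $c\in\mathbb R$, $\delta_c(X_1,X_2)=\ln Z_2-c$, and $\mathcal K_1=\{\delta_c:c\in\mathbb R\}$. Risk: $R(\underline\theta,\delta)=\mathbb E_{\underline\theta}(\delta(X_1,X_2)-H_S(\underline\theta))^2$. $\delta'$ dominates $\delta$ if its risk is $\le$ for all $\underline\theta$ and $<$ for some; $\delta$ is inadmissible if dominated by some estimator; $\delta\in\mathcal K_1$ is admissible within $\mathcal K_1$ if no member of $\mathcal K_1$ dominates it. *)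

theory Defs
  imports "HOL-Analysis.Analysis"
begin

definition gamma_dens :: "real \<Rightarrow> real \<Rightarrow> real \<Rightarrow> real" where
  "gamma_dens \<alpha> \<theta> x =
     (if x > 0 then x powr (\<alpha> - 1) * exp (- x / \<theta>) / (Gamma \<alpha> * \<theta> powr \<alpha>) else 0)"

definition g_std :: "real \<Rightarrow> real \<Rightarrow> real" where
  "g_std \<alpha> z = gamma_dens \<alpha> 1 z"

definition G_std :: "real \<Rightarrow> real \<Rightarrow> real" where
  "G_std \<alpha> z = (LINT t:{..z}|lborel. g_std \<alpha> t)"

definition H_S :: "real \<Rightarrow> real \<Rightarrow> real \<Rightarrow> real \<Rightarrow> real" where
  "H_S \<theta>1 \<theta>2 x1 x2 = (if x1 \<ge> x2 then ln \<theta>1 else ln \<theta>2)"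

definition delta :: "real \<Rightarrow> real \<Rightarrow> real \<Rightarrow> real" where
  "delta c x1 x2 = ln (max x1 x2) - c"

definition risk :: "real \<Rightarrow> real \<Rightarrow> real \<Rightarrow> (real \<Rightarrow> real \<Rightarrow> real) \<Rightarrow> ennreal" where
  "risk \<alpha> \<theta>1 \<theta>2 d =
     (\<integral>\<^sup>+ p. ennreal ((d (fst p) (snd p) - H_S \<theta>1 \<theta>2 (fst p) (snd p))\<^sup>2
                 * gamma_dens \<alpha> \<theta>1 (fst p) * gamma_dens \<alpha> \<theta>2 (snd p))
       \<partial>(lborel \<Otimes>\<^sub>M lborel))"

definition dominates :: "real \<Rightarrow> (real \<Rightarrow> real \<Rightarrow> real) \<Rightarrow> (real \<Rightarrow> real \<Rightarrow> real) \<Rightarrow> bool" where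
  "dominates \<alpha> d' d \<longleftrightarrow>
     (\<forall>\<theta>1>0. \<forall>\<theta>2>0. risk \<alpha> \<theta>1 \<theta>2 d' \<le> risk \<alpha> \<theta>1 \<theta>2 d) \<and>
     (\<exists>\<theta>1>0. \<exists>\<theta>2>0. risk \<alpha> \<theta>1 \<theta>2 d' < risk \<alpha> \<theta>1 \<theta>2 d)"

definition inadmissible :: "real \<Rightarrow> (real \<Rightarrow> real \<Rightarrow> real) \<Rightarrow> bool" where
  "inadmissible \<alpha> d \<longleftrightarrow>
     (\<exists>d'. (\<lambda>p. d' (fst p) (snd p)) \<in> borel_measurable (lborel \<Otimes>\<^sub>M lborel) \<and> dominates \<alpha> d' d)"

definition admissible_K1 :: "real \<Rightarrow> (real \<Rightarrow> real \<Rightarrow> real) \<Rightarrow> bool" where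
  "admissible_K1 \<alpha> d \<longleftrightarrow> \<not> (\<exists>c. dominates \<alpha> (delta c) d)"

definition c2 :: "real \<Rightarrow> real" where
  "c2 \<alpha> = 2 * (LINT z:{0<..}|lborel. ln z * G_std \<alpha> z * g_std \<alpha> z)"

definition Digamma_inv :: "real \<Rightarrow> real" where
  "Digamma_inv y = (THE x. x > 0 \<and> Digamma x = y)"

definition beta0 :: "real \<Rightarrow> real" where
  "beta0 \<alpha> = Digamma_inv (c2 \<alpha>) - \<alpha>"

end

theory Submission
  imports Defs "HOL-Probability.Probability"
begin

definition kf :: "real \<Rightarrow> real \<Rightarrow> real" where
  "kf b z = (if z > 0 then z powr (b - 1) * exp (- z) else 0)"

lemma kf_meas[measurable]: "kf b \<in> borel_measurable borel"
  unfolding kf_def by measurable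

lemma kf_nonneg: "kf b z \<ge> 0"
  unfolding kf_def by auto

lemma kf_hasint:
  assumes "b > 0"
  shows "has_bochner_integral lborel (kf b) (Gamma b)"
proof (rule has_bochner_integral_nn_integral)
  show "kf b \<in> borel_measurable lborel" by simp
  show "AE x in lborel. 0 \<le> kf b x" by (simp add: kf_nonneg)
  show "0 \<le> Gamma b" using Gamma_real_pos[OF assms] by simp
  have "(\<integral>\<^sup>+x. ennreal (kf b x) \<partial>lborel) = 
        (\<integral>\<^sup>+t. ennreal (indicator {0..} t * t powr (b - 1) / exp t) \<partial>lborel)"
    by (intro nn_integral_cong) (auto simp: kf_def exp_minus field_simps indicator_def)
  also have "\<dots> = ennreal (Gamma b)"
    using Gamma_conv_nn_integral_real[OF assms] by simp
  finally show "(\<integral>\<^sup>+x. ennreal (kf b x) \<partial>lborel) = ennreal (Gamma b)" .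
qed

lemma kf_int: "b > 0 \<Longrightarrow> integrable lborel (kf b)"
  by (rule integrable.intros[OF kf_hasint])

lemma kf_integral: "b > 0 \<Longrightarrow> integral\<^sup>L lborel (kf b) = Gamma b"
  by (rule has_bochner_integral_integral_eq[OF kf_hasint])

lemma abs_ln_bound:
  fixes z e :: real assumes "z > 0" "e > 0"
  shows "\<bar>ln z\<bar> \<le> (z powr e + z powr (- e)) / e"
proof -
  have 1: "ln (z powr e) \<le> z powr e" using ln_le_minus_one[of "z powr e"] assms by simp
  have 2: "ln (z powr (-e)) \<le> z powr (-e)" using ln_le_minus_one[of "z powr (-e)"] assms by simp
  have "ln (z powr e) = e * ln z" using assms by (simp add: ln_powr)
  moreover have "ln (z powr (-e)) = - e * ln z" using assms by (simp add: ln_powr)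
  moreover have "z powr e > 0" "z powr (-e) > 0" using assms by auto
  ultimately have "\<bar>e * ln z\<bar> \<le> z powr e + z powr (- e)"
    using 1 2 by (simp only: abs_le_iff) linarith
  hence "e * \<bar>ln z\<bar> \<le> z powr e + z powr (- e)" using assms by (simp add: abs_mult)
  then show ?thesis using assms by (simp add: field_simps)
qed

lemma kf_shift: "z > 0 \<Longrightarrow> z powr e * kf b z = kf (b + e) z"
  unfolding kf_def by (simp add: powr_add[symmetric] algebra_simps)

lemma kf_shift': "z powr e * kf b z = kf (b + e) z"
  by (cases "z > 0") (auto simp: kf_shift, simp add: kf_def)

lemma ln_kf_int:
  assumes "b > 0"
  shows "integrable lborel (\<lambda>z. ln z * kf b z)"
proof -
  define e where "e = b / 2"
  have e: "e > 0" "b - e > 0" using assms by (auto simp: e_def)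
  have I: "integrable lborel (\<lambda>z. (kf (b + e) z + kf (b + - e) z) / e)"
    using e assms by (intro integrable_divide_zero Bochner_Integration.integrable_add kf_int) auto
  show ?thesis
  proof (rule Bochner_Integration.integrable_bound[OF I])
    show "(\<lambda>z. ln z * kf b z) \<in> borel_measurable lborel" by measurable
    show "AE x in lborel. norm (ln x * kf b x) \<le> norm ((kf (b + e) x + kf (b + - e) x) / e)"
    proof (rule AE_I2)
      fix z :: real
      show "norm (ln z * kf b z) \<le> norm ((kf (b + e) z + kf (b + - e) z) / e)"
      proof (cases "z > 0")
        case True
        have "norm (ln z * kf b z) = \<bar>ln z\<bar> * kf b z" by (simp add: abs_mult kf_nonneg)
        also have "\<dots> \<le> (z powr e + z powr (- e)) / e * kf b z"
          using abs_ln_bound[OF True e(1)] by (intro mult_right_mono kf_nonneg) auto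
        also have "\<dots> = (z powr e * kf b z + z powr (-e) * kf b z) / e"
          by (simp add: algebra_simps add_divide_distrib)
        also have "\<dots> = (kf (b + e) z + kf (b + - e) z) / e"
          by (simp only: kf_shift')
        also have "\<dots> \<le> norm ((kf (b + e) z + kf (b + - e) z) / e)" 
          using e kf_nonneg[of "b+e" z] kf_nonneg[of "b-e" z] by simp
        finally show ?thesis .
      qed (simp add: kf_def)
    qed
  qed
qed

lemma ln2_kf_int:
  assumes "b > 0"
  shows "integrable lborel (\<lambda>z. (ln z)\<^sup>2 * kf b z)"
proof -
  define e where "e = b / 4"
  have e: "e > 0" "b - 2*e > 0" using assms by (auto simp: e_def)
  have I: "integrable lborel (\<lambda>z. (kf (b + 2*e) z + 2 * kf b z + kf (b + - (2*e)) z) / e\<^sup>2)"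
    using e assms by (intro integrable_divide_zero Bochner_Integration.integrable_add integrable_mult_right kf_int) auto
  show ?thesis
  proof (rule Bochner_Integration.integrable_bound[OF I])
    show "(\<lambda>z. (ln z)\<^sup>2 * kf b z) \<in> borel_measurable lborel" by measurable
    show "AE x in lborel. norm ((ln x)\<^sup>2 * kf b x) \<le> norm ((kf (b + 2*e) x + 2 * kf b x + kf (b + - (2*e)) x) / e\<^sup>2)"
    proof (rule AE_I2)
      fix z :: real
      show "norm ((ln z)\<^sup>2 * kf b z) \<le> norm ((kf (b + 2*e) z + 2 * kf b z + kf (b + - (2*e)) z) / e\<^sup>2)"
      proof (cases "z > 0")
        case True
        have A: "\<bar>ln z\<bar> \<le> (z powr e + z powr (- e)) / e" by (rule abs_ln_bound[OF True e(1)])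
        have "(ln z)\<^sup>2 = \<bar>ln z\<bar>\<^sup>2" by simp
        also have "\<dots> \<le> ((z powr e + z powr (- e)) / e)\<^sup>2"
          using A by (intro power_mono) auto
        also have "\<dots> = (z powr (2*e) + 2 + z powr (- (2*e))) / e\<^sup>2"
          using True by (simp add: power2_eq_square field_simps powr_add[symmetric])
        finally have B: "(ln z)\<^sup>2 \<le> (z powr (2*e) + 2 + z powr (- (2*e))) / e\<^sup>2" .
        have "norm ((ln z)\<^sup>2 * kf b z) = (ln z)\<^sup>2 * kf b z" by (simp add: kf_nonneg)
        also have "\<dots> \<le> (z powr (2*e) + 2 + z powr (- (2*e))) / e\<^sup>2 * kf b z"
          using B by (intro mult_right_mono kf_nonneg)
        also have "\<dots> = (z powr (2*e) * kf b z + 2 * kf b z + z powr (- (2*e)) * kf b z) / e\<^sup>2"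
          by (simp add: algebra_simps add_divide_distrib)
        also have "\<dots> = (kf (b + 2*e) z + 2 * kf b z + kf (b + - (2*e)) z) / e\<^sup>2"
          by (simp only: kf_shift')
        also have "\<dots> \<le> norm ((kf (b + 2*e) z + 2 * kf b z + kf (b + - (2*e)) z) / e\<^sup>2)"
          using e kf_nonneg[of "b+2*e" z] kf_nonneg[of "b-2*e" z] kf_nonneg[of b z] by simp
        finally show ?thesis .
      qed (simp add: kf_def)
    qed
  qed
qed

lemma exp_minus_one_bound: fixes t :: real shows "\<bar>exp t - 1\<bar> \<le> \<bar>t\<bar> * (exp t + 1)"
proof (cases "t \<ge> 0")
  case True
  have "1 - t \<le> exp (-t)" using exp_ge_add_one_self[of "-t"] by simp
  hence "exp t * (1 - t) \<le> exp t * exp (-t)" by (intro mult_left_mono) auto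
  also have "exp t * exp (-t) = 1" by (simp add: exp_minus)
  finally have "exp t - 1 \<le> t * exp t" by (simp add: algebra_simps)
  moreover have "exp t \<ge> 1" using True by simp
  ultimately show ?thesis using True by (simp add: algebra_simps)
next
  case False
  have "1 + t \<le> exp t" by (rule exp_ge_add_one_self)
  moreover have "exp t < 1" using False by simp
  moreover have "exp t > 0" by simp
  moreover have "\<bar>exp t - 1\<bar> = 1 - exp t" using \<open>exp t < 1\<close> by simp
  moreover have "\<bar>t\<bar> = - t" using False by simp
  ultimately have "\<bar>exp t - 1\<bar> \<le> \<bar>t\<bar>" by linarith
  also have "\<bar>t\<bar> \<le> \<bar>t\<bar> * (exp t + 1)" by (simp add: mult_le_cancel_left1 less_le)
  finally show ?thesis .
qed

lemma deriv_seq: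
  fixes f :: "real \<Rightarrow> real"
  assumes "(f has_real_derivative D) (at x)" "X \<longlonglongrightarrow> 0" "\<And>n. X n \<noteq> 0"
  shows "(\<lambda>n. (f (x + X n) - f x) / X n) \<longlonglongrightarrow> D"
proof -
  have L: "((\<lambda>y. (f y - f x) / (y - x)) \<longlongrightarrow> D) (at x within UNIV)"
    using assms(1) by (simp add: has_field_derivative_iff)
  have B: "(\<lambda>n. x + X n) \<longlonglongrightarrow> x" using tendsto_add[OF tendsto_const assms(2)] by simp
  have C: "\<And>n. x + X n \<in> UNIV - {x}" using assms(3) by simp
  have "((\<lambda>y. (f y - f x) / (y - x)) \<circ> (\<lambda>n. x + X n)) \<longlonglongrightarrow> D"
    using tendsto_at_iff_sequentially[THEN iffD1, OF L, rule_format, of "\<lambda>n. x + X n", OF C B] .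
  then show ?thesis by (simp add: o_def)
qed

lemma powr_small_le: 
  fixes z h c :: real assumes "z > 0" "0 \<le> h" "h \<le> c"
  shows "z powr h \<le> z powr c + 1"
proof (cases "z \<le> 1")
  case True
  then have "z powr h \<le> 1" using assms by (intro powr_le1) auto
  then show ?thesis using powr_ge_zero[of z c] by linarith
next
  case False
  then have "z powr h \<le> z powr c" using assms by (intro powr_mono) auto
  then show ?thesis by simp
qed

lemma ln_kf_integral:
  assumes b: "b > 0"
  shows "integral\<^sup>L lborel (\<lambda>z. ln z * kf b z) = Gamma b * Digamma b"
proof -
  define h where "h n = b/4 * inverse (real (Suc n))" for n :: nat
  have hpos: "h n > 0" for n using b by (simp add: h_def)
  have hle: "h n \<le> b/4" for n using b by (simp add: h_def field_simps)
  have h0: "h \<longlonglongrightarrow> 0" 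
    unfolding h_def by (intro tendsto_mult_right_zero LIMSEQ_inverse_real_of_nat)
  have notint: "b \<notin> \<int>\<^sub>\<le>\<^sub>0" using b by (auto elim!: nonpos_Ints_cases)
  have D: "(Gamma has_real_derivative Gamma b * Digamma b) (at b)"
    using has_field_derivative_Gamma[OF notint] by blast
  have L1: "(\<lambda>n. (Gamma (b + h n) - Gamma b) / h n) \<longlonglongrightarrow> Gamma b * Digamma b"
    using deriv_seq[OF D h0] hpos by (simp add: less_imp_neq[symmetric])
  define s where "s n z = (kf (b + h n) z - kf b z) / h n" for n z
  have eq: "integral\<^sup>L lborel (s n) = (Gamma (b + h n) - Gamma b) / h n" for n
  proof -
    have "integral\<^sup>L lborel (s n) = (integral\<^sup>L lborel (kf (b + h n)) - integral\<^sup>L lborel (kf b)) / h n"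
      unfolding s_def using b hpos[of n]
      by (subst integral_divide_zero, subst Bochner_Integration.integral_diff) (auto intro!: kf_int)
    moreover have "integral\<^sup>L lborel (kf (b + h n)) = Gamma (b + h n)"
      by (rule kf_integral) (use b hpos[of n] in linarith)
    ultimately show ?thesis using kf_integral[OF b] by simp
  qed
  define w where "w z = 2 * \<bar>ln z * kf b z\<bar> + \<bar>ln z * kf (b + b/4) z\<bar>" for z
  have L2: "(\<lambda>n. integral\<^sup>L lborel (s n)) \<longlonglongrightarrow> integral\<^sup>L lborel (\<lambda>z. ln z * kf b z)"
  proof (rule integral_dominated_convergence[where w = w])
    show "(\<lambda>z. ln z * kf b z) \<in> borel_measurable lborel" by measurable
    show "s n \<in> borel_measurable lborel" for n unfolding s_def by measurable
    show "integrable lborel w" unfolding w_def using b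
      by (intro Bochner_Integration.integrable_add integrable_mult_right integrable_abs ln_kf_int) auto
    show "AE z in lborel. (\<lambda>n. s n z) \<longlonglongrightarrow> ln z * kf b z"
    proof (rule AE_I2)
      fix z :: real
      show "(\<lambda>n. s n z) \<longlonglongrightarrow> ln z * kf b z"
      proof (cases "z > 0")
        case True
        have Dz: "((\<lambda>t. exp (t * ln z)) has_real_derivative exp (0 * ln z) * ln z) (at 0)"
          by (auto intro!: derivative_eq_intros)
        have "(\<lambda>n. (exp ((0 + h n) * ln z) - exp (0 * ln z)) / h n) \<longlonglongrightarrow> exp (0 * ln z) * ln z"
          using deriv_seq[OF Dz h0] hpos by (simp add: less_imp_neq[symmetric])
        then have "(\<lambda>n. (z powr h n - 1) / h n) \<longlonglongrightarrow> ln z"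
          using True by (simp add: powr_def)
        then have "(\<lambda>n. kf b z * ((z powr h n - 1) / h n)) \<longlonglongrightarrow> kf b z * ln z"
          by (intro tendsto_mult_left)
        moreover have "s n z = kf b z * ((z powr h n - 1) / h n)" for n
          unfolding s_def kf_shift'[symmetric] by (simp add: algebra_simps diff_divide_distrib)
        ultimately show ?thesis by (simp add: mult.commute)
      qed (simp add: s_def kf_def)
    qed
    show "AE z in lborel. norm (s n z) \<le> w z" for n
    proof (rule AE_I2)
      fix z :: real
      show "norm (s n z) \<le> w z"
      proof (cases "z > 0")
        case True
        have e1: "\<bar>z powr h n - 1\<bar> \<le> h n * \<bar>ln z\<bar> * (z powr h n + 1)"
          using exp_minus_one_bound[of "h n * ln z"] True hpos[of n]
          by (simp add: powr_def abs_mult mult.commute)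
        have e2: "z powr h n \<le> z powr (b/4) + 1"
          by (rule powr_small_le[OF True]) (use hpos[of n] hle[of n] in auto)
        have "s n z = kf b z * ((z powr h n - 1) / h n)"
          unfolding s_def kf_shift'[symmetric] by (simp add: algebra_simps diff_divide_distrib)
        then have "norm (s n z) = kf b z * \<bar>z powr h n - 1\<bar> / h n"
          using hpos[of n] kf_nonneg[of b z] by (simp add: abs_mult)
        also have "\<dots> \<le> kf b z * (h n * \<bar>ln z\<bar> * (z powr h n + 1)) / h n"
          using mult_left_mono[OF e1 kf_nonneg[of b z]] hpos[of n]
          by (intro divide_right_mono) auto
        also have "\<dots> = kf b z * \<bar>ln z\<bar> * (z powr h n + 1)"
          using hpos[of n] by (simp add: field_simps)
        also have "\<dots> \<le> kf b z * \<bar>ln z\<bar> * (z powr (b/4) + 2)"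
          using e2 kf_nonneg[of b z] by (intro mult_left_mono) auto
        also have "\<dots> = 2 * (\<bar>ln z\<bar> * kf b z) + \<bar>ln z\<bar> * (z powr (b/4) * kf b z)"
          by (simp add: algebra_simps)
        also have "\<dots> = w z"
          unfolding w_def kf_shift' using kf_nonneg[of b z] kf_nonneg[of "b + b/4" z]
          by (simp add: abs_mult)
        finally show ?thesis .
      qed (simp add: s_def kf_def w_def)
    qed
  qed
  from L2 have "(\<lambda>n. (Gamma (b + h n) - Gamma b) / h n) \<longlonglongrightarrow> integral\<^sup>L lborel (\<lambda>z. ln z * kf b z)"
    by (simp add: eq)
  with L1 show ?thesis using LIMSEQ_unique by blast
qed

lemma g_std_kf: "g_std a z = kf a z / Gamma a"
  by (simp add: g_std_def gamma_dens_def kf_def)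

lemma gamma_dens_kf:
  assumes "\<theta> > 0"
  shows "gamma_dens a \<theta> x = kf a (x / \<theta>) / (Gamma a * \<theta>)"
proof (cases "x > 0")
  case True
  have e1: "x powr (a - 1) = \<theta> powr (a - 1) * (x / \<theta>) powr (a - 1)"
    using True assms by (simp add: powr_divide)
  have e2: "\<theta> powr a = \<theta> powr (a - 1) * \<theta>"
    using assms by (simp add: powr_diff)
  have p: "\<theta> powr (a - 1) > 0" using assms by simp
  have "gamma_dens a \<theta> x = \<theta> powr (a - 1) * (x / \<theta>) powr (a - 1) * exp (- (x / \<theta>)) /
      (Gamma a * (\<theta> powr (a - 1) * \<theta>))"
    using True by (simp add: gamma_dens_def e1 e2)
  also have "\<dots> = (x / \<theta>) powr (a - 1) * exp (- (x / \<theta>)) / (Gamma a * \<theta>)"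
    using p by (simp add: field_simps)
  finally show ?thesis using True assms by (simp add: kf_def)
next
  case False
  then have "\<not> x / \<theta> > 0" using assms by (simp add: zero_less_divide_iff)
  then show ?thesis using False by (simp add: gamma_dens_def kf_def)
qed

lemma gamma_dens_nonneg: "\<theta> > 0 \<Longrightarrow> a > 0 \<Longrightarrow> gamma_dens a \<theta> x \<ge> 0"
  by (simp add: gamma_dens_kf kf_nonneg Gamma_real_pos)

lemma gamma_dens_meas[measurable]: "gamma_dens a \<theta> \<in> borel_measurable borel"
  unfolding gamma_dens_def by measurable

locale gm =
  fixes a :: real
  assumes a_pos: "a > 0"
begin

abbreviation g where "g \<equiv> g_std a"

lemma Gpos: "Gamma a > 0" using Gamma_real_pos[OF a_pos] .

lemma g_nonneg: "g z \<ge> 0"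
  using Gpos by (simp add: g_std_kf kf_nonneg)

lemma g_pos: "z > 0 \<Longrightarrow> g z > 0"
  using Gpos by (simp add: g_std_kf kf_def)

lemma g_zero: "z \<le> 0 \<Longrightarrow> g z = 0"
  by (simp add: g_std_kf kf_def)

lemma g_meas[measurable]: "g \<in> borel_measurable borel"
  unfolding g_std_def by measurable

lemma g_int: "integrable lborel g"
  unfolding g_std_kf using kf_int[OF a_pos] by simp

lemma g_integral: "integral\<^sup>L lborel g = 1"
  unfolding g_std_kf using kf_integral[OF a_pos] Gpos by simp

lemma ln_g_int: "integrable lborel (\<lambda>z. g z * ln z)"
  unfolding g_std_kf using ln_kf_int[OF a_pos] by (simp add: mult.commute)

lemma ln2_g_int: "integrable lborel (\<lambda>z. g z * (ln z)\<^sup>2)"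
  unfolding g_std_kf using ln2_kf_int[OF a_pos] by (simp add: mult.commute)

lemma ln_g_integral: "(\<integral>z. g z * ln z \<partial>lborel) = Digamma a"
  unfolding g_std_kf using ln_kf_integral[OF a_pos] Gpos by (simp add: mult.commute)

definition D where "D = density lborel (\<lambda>z. ennreal (g z))"

lemma sets_D[simp, measurable_cong]: "sets D = sets borel"
  by (simp add: D_def)

lemma space_D[simp]: "space D = UNIV"
  by (simp add: D_def)

lemma nn_g: "(\<integral>\<^sup>+z. ennreal (g z) \<partial>lborel) = 1"
  using nn_integral_eq_integral[OF g_int] g_nonneg g_integral by simp

lemma prob_D: "prob_space D"
proof
  show "emeasure D (space D) = 1"
    by (simp add: D_def emeasure_density nn_g)
qed

lemma integrable_D: "integrable D f \<longleftrightarrow> integrable lborel (\<lambda>z. g z * f z)"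
  if [measurable]: "f \<in> borel_measurable borel" for f :: "real \<Rightarrow> real"
  unfolding D_def by (subst integrable_density) (auto simp: g_nonneg)

lemma integral_D: "integral\<^sup>L D f = (\<integral>z. g z * f z \<partial>lborel)"
  if [measurable]: "f \<in> borel_measurable borel" for f :: "real \<Rightarrow> real"
  unfolding D_def by (subst integral_density) (auto simp: g_nonneg)

lemma ln_D_int: "integrable D ln"
  using ln_g_int by (simp add: integrable_D)

lemma ln2_D_int: "integrable D (\<lambda>z. (ln z)\<^sup>2)"
  using ln2_g_int by (simp add: integrable_D)

lemma ln_D_integral: "integral\<^sup>L D ln = Digamma a"
  using ln_g_integral by (simp add: integral_D)

lemma AE_D_pos: "AE z in D. z > 0"
  unfolding D_def
  apply (subst AE_density, simp)
  apply (rule AE_I2)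
  using g_zero by (metis ennreal_0 not_less less_irrefl)

lemma emeasure_D: "A \<in> sets borel \<Longrightarrow> emeasure D A = (\<integral>\<^sup>+z. ennreal (g z) * indicator A z \<partial>lborel)"
  unfolding D_def by (simp add: emeasure_density)

lemma D_Ioo_pos:
  assumes "0 \<le> l" "l < u"
  shows "emeasure D {l<..<u} > 0"
proof (rule ccontr)
  assume "\<not> emeasure D {l<..<u} > 0"
  then have "(\<integral>\<^sup>+z. ennreal (g z) * indicator {l<..<u} z \<partial>lborel) = 0"
    by (simp add: emeasure_D)
  then have "AE z in lborel. ennreal (g z) * indicator {l<..<u} z = 0"
    by (subst (asm) nn_integral_0_iff_AE) auto
  then have "AE z in lborel. z \<notin> {l<..<u}"
  proof (rule AE_mp, intro AE_I2 impI)
    fix z assume "ennreal (g z) * indicator {l<..<u} z = 0"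
    then show "z \<notin> {l<..<u}" using g_pos[of z] assms by (auto simp: indicator_def)
  qed
  then have "emeasure lborel {l<..<u} = 0"
    by (subst (asm) AE_iff_measurable[where N="{l<..<u}"]) auto
  then show False using assms by simp
qed

lemma D_singleton: "emeasure D {x} = 0"
proof -
  have "(\<integral>\<^sup>+z. ennreal (g z) * indicator {x} z \<partial>lborel) = 0"
  proof (subst nn_integral_0_iff_AE)
    show "AE z in lborel. ennreal (g z) * indicator {x} z = 0"
      using AE_lborel_singleton[of x] by eventually_elim (auto simp: indicator_def)
  qed auto
  then show ?thesis by (simp add: emeasure_D)
qed

definition Dt where "Dt \<theta> = density lborel (\<lambda>x. ennreal (gamma_dens a \<theta> x))"

lemma Dt_distr:
  assumes th: "\<theta> > 0"
  shows "Dt \<theta> = distr D lborel ((*) \<theta>)"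
proof (rule measure_eqI)
  show "sets (Dt \<theta>) = sets (distr D lborel ((*) \<theta>))" by (simp add: Dt_def)
  fix A assume "A \<in> sets (Dt \<theta>)"
  then have A[measurable]: "A \<in> sets borel" by (simp add: Dt_def)
  have "emeasure (Dt \<theta>) A = (\<integral>\<^sup>+x. ennreal (gamma_dens a \<theta> x) * indicator A x \<partial>lborel)"
    by (simp add: Dt_def emeasure_density)
  also have "\<dots> = ennreal \<bar>\<theta>\<bar> * (\<integral>\<^sup>+x. ennreal (gamma_dens a \<theta> (0 + \<theta> * x)) * indicator A (0 + \<theta> * x) \<partial>lborel)"
    using th by (intro nn_integral_real_affine) auto
  also have "\<dots> = (\<integral>\<^sup>+x. ennreal (g x) * indicator A (\<theta> * x) \<partial>lborel)"
  proof -
    have "ennreal \<bar>\<theta>\<bar> * (ennreal (gamma_dens a \<theta> (\<theta> * x)) * indicator A (\<theta> * x)) =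
          ennreal (g x) * indicator A (\<theta> * x)" for x
    proof -
      have "\<theta> * gamma_dens a \<theta> (\<theta> * x) = g x"
        using th Gpos by (simp add: gamma_dens_kf g_std_kf field_simps)
      then show ?thesis using th
        by (simp add: ennreal_mult[symmetric] mult.assoc[symmetric] gamma_dens_nonneg a_pos)
    qed
    then show ?thesis by (simp add: nn_integral_cmult[symmetric])
  qed
  also have "\<dots> = emeasure D ((*) \<theta> -` A)"
  proof -
    have "(*) \<theta> -` A \<inter> space borel \<in> sets borel"
      by (rule measurable_sets[OF _ A]) measurable
    then have [measurable]: "(*) \<theta> -` A \<in> sets borel" by simp
    show ?thesis by (subst emeasure_D) (auto simp: indicator_def intro!: nn_integral_cong)
  qed
  also have "\<dots> = emeasure (distr D lborel ((*) \<theta>)) A"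
    by (subst emeasure_distr) auto
  finally show "emeasure (Dt \<theta>) A = emeasure (distr D lborel ((*) \<theta>)) A" .
qed

end

definition w :: "real \<Rightarrow> real \<Rightarrow> real \<times> real \<Rightarrow> real" where
  "w \<theta>1 \<theta>2 p = (if \<theta>1 * fst p \<ge> \<theta>2 * snd p then ln (fst p) else ln (snd p))"

lemma w_meas[measurable]: "w \<theta>1 \<theta>2 \<in> borel_measurable (borel \<Otimes>\<^sub>M borel)"
  unfolding w_def by measurable

lemma sq_meas[measurable]: "(\<lambda>p. (delta c (fst p) (snd p) - H_S \<theta>1 \<theta>2 (fst p) (snd p))\<^sup>2) \<in> borel_measurable (borel \<Otimes>\<^sub>M borel)"
  unfolding delta_def H_S_def by measurable

context gm begin

lemma Dprob: "prob_space D" by (rule prob_D)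

abbreviation Q where "Q \<equiv> D \<Otimes>\<^sub>M D"

lemma pairQ: "pair_prob_space D D"
  using prob_D by (simp add: pair_prob_space_def pair_sigma_finite_def prob_space_imp_sigma_finite)

lemma probQ: "prob_space Q"
proof -
  interpret pair_prob_space D D by (rule pairQ)
  show ?thesis by unfold_locales
qed

lemma sets_Q[measurable_cong]: "sets Q = sets (borel \<Otimes>\<^sub>M borel)"
  by (intro sets_pair_measure_cong) simp_all

lemma space_Q[simp]: "space Q = UNIV"
  by (simp add: space_pair_measure)

lemma distr_Q_fst: "distr Q D fst = D"
  using prob_space.distr_pair_fst[OF prob_D] .

lemma distr_Q_snd: "distr Q D snd = D"
proof (intro measure_eqI)
  interpret pair_prob_space D D by (rule pairQ)
  fix A assume A: "A \<in> sets (distr Q D snd)"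
  then have "emeasure (distr Q D snd) A = emeasure Q (space D \<times> A)"
    by (auto simp add: emeasure_distr space_pair_measure intro!: arg_cong2[where f=emeasure])
  with A show "emeasure (distr Q D snd) A = emeasure D A"
    using sigma_finite_measure.emeasure_pair_measure_Times[OF prob_space_imp_sigma_finite[OF prob_D], of UNIV D A] M1.emeasure_space_1 by simp
qed simp

lemma int_fst:
  fixes f :: "real \<Rightarrow> real"
  assumes [measurable]: "f \<in> borel_measurable borel"
  shows "integrable Q (\<lambda>p. f (fst p)) \<longleftrightarrow> integrable D f"
    and "integral\<^sup>L Q (\<lambda>p. f (fst p)) = integral\<^sup>L D f"
proof -
  have m: "fst \<in> Q \<rightarrow>\<^sub>M D" by simp
  have "integrable (distr Q D fst) f \<longleftrightarrow> integrable Q (\<lambda>p. f (fst p))"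
    by (rule integrable_distr_eq[OF m]) simp
  then show "integrable Q (\<lambda>p. f (fst p)) \<longleftrightarrow> integrable D f" by (simp add: distr_Q_fst)
  have "integral\<^sup>L (distr Q D fst) f = integral\<^sup>L Q (\<lambda>p. f (fst p))"
    by (rule integral_distr[OF m]) simp
  then show "integral\<^sup>L Q (\<lambda>p. f (fst p)) = integral\<^sup>L D f" by (simp add: distr_Q_fst)
qed

lemma int_snd:
  fixes f :: "real \<Rightarrow> real"
  assumes [measurable]: "f \<in> borel_measurable borel"
  shows "integrable Q (\<lambda>p. f (snd p)) \<longleftrightarrow> integrable D f"
    and "integral\<^sup>L Q (\<lambda>p. f (snd p)) = integral\<^sup>L D f"
proof -
  have m: "snd \<in> Q \<rightarrow>\<^sub>M D" by simp
  have "integrable (distr Q D snd) f \<longleftrightarrow> integrable Q (\<lambda>p. f (snd p))"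
    by (rule integrable_distr_eq[OF m]) simp
  then show "integrable Q (\<lambda>p. f (snd p)) \<longleftrightarrow> integrable D f" by (simp add: distr_Q_snd)
  have "integral\<^sup>L (distr Q D snd) f = integral\<^sup>L Q (\<lambda>p. f (snd p))"
    by (rule integral_distr[OF m]) simp
  then show "integral\<^sup>L Q (\<lambda>p. f (snd p)) = integral\<^sup>L D f" by (simp add: distr_Q_snd)
qed

lemma AE_Q_pos: "AE p in Q. fst p > 0 \<and> snd p > 0"
proof -
  interpret pair_prob_space D D by (rule pairQ)
  have "AE x in D. AE y in D. fst (x, y) > 0 \<and> snd (x, y) > 0"
    using AE_D_pos
  proof eventually_elim
    case (elim x)
    show ?case using AE_D_pos by eventually_elim (use elim in simp)
  qed
  moreover have "Measurable.pred Q (\<lambda>x. fst x > 0 \<and> snd x > 0)" by measurable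
  ultimately show ?thesis
    by (intro AE_pair_measure) (simp_all add: pred_def)
qed

definition P where
  "P \<theta>1 \<theta>2 = density (lborel \<Otimes>\<^sub>M lborel) (\<lambda>p. ennreal (gamma_dens a \<theta>1 (fst p) * gamma_dens a \<theta>2 (snd p)))"

lemma P_distr:
  assumes t1: "\<theta>1 > 0" and t2: "\<theta>2 > 0"
  shows "P \<theta>1 \<theta>2 = distr Q (lborel \<Otimes>\<^sub>M lborel) (\<lambda>(x, y). (\<theta>1 * x, \<theta>2 * y))"
proof -
  have sf2: "sigma_finite_measure (Dt \<theta>2)"
    unfolding Dt_distr[OF t2]
    by (intro prob_space_imp_sigma_finite prob_space.prob_space_distr[OF prob_D]) simp
  have "Dt \<theta>1 \<Otimes>\<^sub>M Dt \<theta>2 = density (lborel \<Otimes>\<^sub>M lborel)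
          (\<lambda>(x, y). ennreal (gamma_dens a \<theta>1 x) * ennreal (gamma_dens a \<theta>2 y))"
    unfolding Dt_def
    by (rule pair_measure_density) (simp_all add: Dt_def[symmetric] sf2 lborel.sigma_finite_measure_axioms)
  also have "\<dots> = P \<theta>1 \<theta>2"
    unfolding P_def using t1 t2 a_pos
    by (intro density_cong) (auto simp: ennreal_mult gamma_dens_nonneg)
  finally have 1: "P \<theta>1 \<theta>2 = Dt \<theta>1 \<Otimes>\<^sub>M Dt \<theta>2" ..
  have 2: "distr D lborel ((*) \<theta>1) \<Otimes>\<^sub>M distr D lborel ((*) \<theta>2) =
        distr Q (lborel \<Otimes>\<^sub>M lborel) (\<lambda>(x, y). (\<theta>1 * x, \<theta>2 * y))"
    by (rule pair_measure_distr) (simp_all add: sf2[unfolded Dt_distr[OF t2]])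
  show ?thesis using 1 2 by (simp add: Dt_distr t1 t2)
qed


lemma risk_Q:
  assumes t1: "\<theta>1 > 0" and t2: "\<theta>2 > 0"
  shows "risk a \<theta>1 \<theta>2 (delta c) = (\<integral>\<^sup>+p. ennreal ((w \<theta>1 \<theta>2 p - c)\<^sup>2) \<partial>Q)"
proof -
  let ?sq = "\<lambda>p. (delta c (fst p) (snd p) - H_S \<theta>1 \<theta>2 (fst p) (snd p))\<^sup>2"
  have "risk a \<theta>1 \<theta>2 (delta c) = (\<integral>\<^sup>+p. ennreal (?sq p) \<partial>P \<theta>1 \<theta>2)"
    unfolding risk_def P_def
    by (subst nn_integral_density)
       (auto intro!: nn_integral_cong simp: ennreal_mult'[symmetric] gamma_dens_nonneg t1 t2 a_pos mult_ac)
  also have "\<dots> = (\<integral>\<^sup>+p. ennreal (?sq ((\<lambda>(x, y). (\<theta>1 * x, \<theta>2 * y)) p)) \<partial>Q)"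
    unfolding P_distr[OF t1 t2] by (subst nn_integral_distr) auto
  also have "\<dots> = (\<integral>\<^sup>+p. ennreal ((w \<theta>1 \<theta>2 p - c)\<^sup>2) \<partial>Q)"
  proof (rule nn_integral_cong_AE)
    show "AE p in Q. ennreal (?sq ((\<lambda>(x, y). (\<theta>1 * x, \<theta>2 * y)) p)) = ennreal ((w \<theta>1 \<theta>2 p - c)\<^sup>2)"
      using AE_Q_pos
    proof (rule AE_mp, intro AE_I2 impI)
      fix p :: "real \<times> real" assume pp: "fst p > 0 \<and> snd p > 0"
      obtain x y where p: "p = (x, y)" by (cases p)
      have x: "x > 0" and y: "y > 0" using pp p by auto
      have "delta c (\<theta>1 * x) (\<theta>2 * y) - H_S \<theta>1 \<theta>2 (\<theta>1 * x) (\<theta>2 * y) = w \<theta>1 \<theta>2 (x, y) - c"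
        using x y t1 t2 by (simp add: delta_def H_S_def w_def max_def ln_mult)
      then show "ennreal (?sq ((\<lambda>(x, y). (\<theta>1 * x, \<theta>2 * y)) p)) = ennreal ((w \<theta>1 \<theta>2 p - c)\<^sup>2)"
        by (simp add: p)
    qed
  qed
  finally show ?thesis .
qed

end

context gm begin

lemma lnfst_int: "integrable Q (\<lambda>p. ln (fst p))"
  using int_fst(1)[of ln] ln_D_int by simp
lemma lnsnd_int: "integrable Q (\<lambda>p. ln (snd p))"
  using int_snd(1)[of ln] ln_D_int by simp
lemma lnfst_integral: "integral\<^sup>L Q (\<lambda>p. ln (fst p)) = Digamma a"
  using int_fst(2)[of ln] ln_D_integral by simp
lemma lnsnd_integral: "integral\<^sup>L Q (\<lambda>p. ln (snd p)) = Digamma a"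
  using int_snd(2)[of ln] ln_D_integral by simp
lemma ln2fst_int: "integrable Q (\<lambda>p. (ln (fst p))\<^sup>2)"
  using int_fst(1)[of "\<lambda>z. (ln z)\<^sup>2"] ln2_D_int by simp
lemma ln2snd_int: "integrable Q (\<lambda>p. (ln (snd p))\<^sup>2)"
  using int_snd(1)[of "\<lambda>z. (ln z)\<^sup>2"] ln2_D_int by simp

lemma w_cases: "w t1 t2 p = ln (fst p) \<or> w t1 t2 p = ln (snd p)"
  unfolding w_def by auto

lemma w_sq_int: "integrable Q (\<lambda>p. (w t1 t2 p)\<^sup>2)"
proof (rule Bochner_Integration.integrable_bound)
  show "integrable Q (\<lambda>p. (ln (fst p))\<^sup>2 + (ln (snd p))\<^sup>2)"
    using ln2fst_int ln2snd_int by (rule Bochner_Integration.integrable_add)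
  show "(\<lambda>p. (w t1 t2 p)\<^sup>2) \<in> borel_measurable Q" by measurable
  show "AE p in Q. norm ((w t1 t2 p)\<^sup>2) \<le> norm ((ln (fst p))\<^sup>2 + (ln (snd p))\<^sup>2)"
  proof (rule AE_I2)
    fix p :: "real \<times> real"
    have "(w t1 t2 p)\<^sup>2 \<le> (ln (fst p))\<^sup>2 + (ln (snd p))\<^sup>2"
      using w_cases[of t1 t2 p] by (elim disjE) simp_all
    then show "norm ((w t1 t2 p)\<^sup>2) \<le> norm ((ln (fst p))\<^sup>2 + (ln (snd p))\<^sup>2)" by simp
  qed
qed

lemma w_int: "integrable Q (w t1 t2)"
proof -
  interpret prob_space Q by (rule probQ)
  show ?thesis by (rule square_integrable_imp_integrable) (simp_all add: w_sq_int)
qed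

definition Bm where "Bm t1 t2 = integral\<^sup>L Q (w t1 t2)"
definition Am where "Am t1 t2 = integral\<^sup>L Q (\<lambda>p. (w t1 t2 p)\<^sup>2)"

definition R where "R t1 t2 c = Am t1 t2 - 2 * c * Bm t1 t2 + c\<^sup>2"

lemma R_eq: "R t1 t2 c = integral\<^sup>L Q (\<lambda>p. (w t1 t2 p - c)\<^sup>2)"
proof -
  interpret prob_space Q by (rule probQ)
  have "(\<lambda>p. (w t1 t2 p - c)\<^sup>2) = (\<lambda>p. ((w t1 t2 p)\<^sup>2 - 2 * c * w t1 t2 p) + c\<^sup>2)"
    by (simp add: power2_diff algebra_simps)
  then have "integral\<^sup>L Q (\<lambda>p. (w t1 t2 p - c)\<^sup>2) = 
     integral\<^sup>L Q (\<lambda>p. (w t1 t2 p)\<^sup>2) - integral\<^sup>L Q (\<lambda>p. 2 * c * w t1 t2 p) + c\<^sup>2"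
    using w_sq_int w_int prob_space by simp
  then show ?thesis by (simp add: R_def Am_def Bm_def)
qed

lemma R_nonneg: "R t1 t2 c \<ge> 0"
  unfolding R_eq by (rule integral_nonneg_AE) simp

lemma risk_R:
  assumes "t1 > 0" "t2 > 0"
  shows "risk a t1 t2 (delta c) = ennreal (R t1 t2 c)"
proof -
  have int: "integrable Q (\<lambda>p. (w t1 t2 p - c)\<^sup>2)"
  proof -
    have "(\<lambda>p. (w t1 t2 p - c)\<^sup>2) = (\<lambda>p. ((w t1 t2 p)\<^sup>2 - 2 * c * w t1 t2 p) + c\<^sup>2)"
      by (simp add: power2_diff algebra_simps)
    moreover have "integrable Q (\<lambda>p. ((w t1 t2 p)\<^sup>2 - 2 * c * w t1 t2 p) + c\<^sup>2)"
    proof -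
      interpret prob_space Q by (rule probQ)
      show ?thesis using w_sq_int w_int by simp
    qed
    ultimately show ?thesis by simp
  qed
  show ?thesis
    unfolding risk_Q[OF assms] R_eq
    by (rule nn_integral_eq_integral[OF int]) simp
qed

lemma R_diff: "R t1 t2 u - R t1 t2 v = (u - v) * (u + v - 2 * Bm t1 t2)"
  unfolding R_def by (simp add: power2_eq_square algebra_simps)

end

context gm begin

lemma int_pos_box:
  fixes f :: "real \<times> real \<Rightarrow> real"
  assumes int: "integrable Q f" and nn: "AE p in Q. f p \<ge> 0"
    and la: "0 \<le> la" "la < ua" and lb: "0 \<le> lb" "lb < ub"
    and pos: "\<And>x y. la < x \<Longrightarrow> x < ua \<Longrightarrow> lb < y \<Longrightarrow> y < ub \<Longrightarrow> f (x, y) > 0"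
  shows "integral\<^sup>L Q f > 0"
proof -
  have ge: "integral\<^sup>L Q f \<ge> 0" using nn by (rule integral_nonneg_AE)
  have f_meas[measurable]: "f \<in> borel_measurable Q" using int by (rule borel_measurable_integrable)
  have "integral\<^sup>L Q f \<noteq> 0"
  proof
    assume "integral\<^sup>L Q f = 0"
    then have "AE p in Q. f p = 0" using integral_nonneg_eq_0_iff_AE[OF int nn] by simp
    then have "AE p in Q. p \<notin> {la<..<ua} \<times> {lb<..<ub}"
      by eventually_elim (use pos in force)
    then have "emeasure Q ({la<..<ua} \<times> {lb<..<ub}) = 0"
      by (subst (asm) AE_iff_measurable[OF _ refl]) (auto simp: sets_Q)
    moreover have "emeasure Q ({la<..<ua} \<times> {lb<..<ub}) = emeasure D {la<..<ua} * emeasure D {lb<..<ub}"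
      by (rule sigma_finite_measure.emeasure_pair_measure_Times[OF prob_space_imp_sigma_finite[OF prob_D]]) simp_all
    moreover have "emeasure D {la<..<ua} > 0" "emeasure D {lb<..<ub} > 0"
      using D_Ioo_pos la lb by auto
    ultimately show False by (simp add: zero_less_iff_neq_zero)
  qed
  with ge show ?thesis by simp
qed

lemma Bm_gt:
  assumes t1: "t1 > 0" and t2: "t2 > 0"
  shows "Bm t1 t2 > Digamma a"
proof (cases "t2 \<le> t1")
  case True
  let ?f = "\<lambda>p. w t1 t2 p - ln (fst p)"
  have "integral\<^sup>L Q ?f > 0"
  proof (rule int_pos_box[where la=0 and ua=1 and lb="t1/t2" and ub="t1/t2 + 1"])
    show "integrable Q ?f" using w_int lnfst_int by (rule Bochner_Integration.integrable_diff)
    show "AE p in Q. ?f p \<ge> 0" using AE_Q_pos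
    proof eventually_elim
      case (elim p)
      show ?case
      proof (cases "t1 * fst p \<ge> t2 * snd p")
        case False
        then have "t2 * snd p > t2 * fst p" using mult_right_mono[OF True, of "fst p"] elim 
          by linarith
        then have "snd p > fst p" using t2 by simp
        then show ?thesis using False elim by (simp add: w_def)
      qed (simp add: w_def)
    qed
    show "0 \<le> (0::real)" "(0::real) < 1" by simp_all
    show "0 \<le> t1 / t2" "t1 / t2 < t1 / t2 + 1" using t1 t2 by simp_all
    fix x y :: real assume x: "0 < x" "x < 1" and y: "t1 / t2 < y" "y < t1 / t2 + 1"
    have "t1 < t2 * y" using y t2 by (simp add: field_simps)
    moreover have "t1 * x < t1" using x t1 by simp
    ultimately have nc: "\<not> t1 * x \<ge> t2 * y" by linarith
    have "1 \<le> t1 / t2" using True t2 by simp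
    then have "x < y" using x y by linarith
    then show "?f (x, y) > 0" using nc x by (simp add: w_def)
  qed
  then show ?thesis
    using lnfst_integral by (simp add: Bm_def Bochner_Integration.integral_diff[OF w_int lnfst_int])
next
  case False
  let ?f = "\<lambda>p. w t1 t2 p - ln (snd p)"
  have "integral\<^sup>L Q ?f > 0"
  proof (rule int_pos_box[where lb=0 and ub=1 and la="t2/t1" and ua="t2/t1 + 1"])
    show "integrable Q ?f" using w_int lnsnd_int by (rule Bochner_Integration.integrable_diff)
    show "AE p in Q. ?f p \<ge> 0" using AE_Q_pos
    proof eventually_elim
      case (elim p)
      show ?case
      proof (cases "t1 * fst p \<ge> t2 * snd p")
        case True
        then have "t1 * fst p \<ge> t1 * snd p" using mult_right_mono[of t1 t2 "snd p"] False elim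
          by linarith
        then have "fst p \<ge> snd p" using t1 by simp
        then show ?thesis using True elim by (simp add: w_def)
      qed (simp add: w_def)
    qed
    show "0 \<le> (0::real)" "(0::real) < 1" by simp_all
    show "0 \<le> t2 / t1" "t2 / t1 < t2 / t1 + 1" using t1 t2 by simp_all
    fix x y :: real assume y: "0 < y" "y < 1" and x: "t2 / t1 < x" "x < t2 / t1 + 1"
    have "t2 < t1 * x" using x t1 by (simp add: field_simps)
    moreover have "t2 * y < t2" using y t2 by simp
    ultimately have nc: "t1 * x \<ge> t2 * y" by linarith
    have "1 \<le> t2 / t1" using False t1 by simp
    then have "y < x" using x y by linarith
    then show "?f (x, y) > 0" using nc y by (simp add: w_def)
  qed
  then show ?thesis
    using lnsnd_integral by (simp add: Bm_def Bochner_Integration.integral_diff[OF w_int lnsnd_int])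
qed

definition Mx :: "real \<times> real \<Rightarrow> real" where "Mx p = max (ln (fst p)) (ln (snd p))"

lemma Mx_meas[measurable]: "Mx \<in> borel_measurable (borel \<Otimes>\<^sub>M borel)"
  unfolding Mx_def by measurable

lemma Mx_int: "integrable Q Mx"
proof (rule Bochner_Integration.integrable_bound)
  show "integrable Q (\<lambda>p. \<bar>ln (fst p)\<bar> + \<bar>ln (snd p)\<bar>)"
    using lnfst_int lnsnd_int by (intro Bochner_Integration.integrable_add integrable_abs)
  show "Mx \<in> borel_measurable Q" by measurable
  show "AE p in Q. norm (Mx p) \<le> norm (\<bar>ln (fst p)\<bar> + \<bar>ln (snd p)\<bar>)"
    by (rule AE_I2) (auto simp: Mx_def max_def)
qed

lemma Bm_le: "Bm t1 t2 \<le> integral\<^sup>L Q Mx"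
  unfolding Bm_def
  by (rule integral_mono[OF w_int Mx_int]) (auto simp: w_def Mx_def)

lemma Bm_11: "Bm 1 1 = integral\<^sup>L Q Mx"
  unfolding Bm_def
proof (rule integral_cong_AE)
  show "AE p in Q. w 1 1 p = Mx p" using AE_Q_pos
    by eventually_elim (auto simp: w_def Mx_def max_def)
qed simp_all

lemma Mx_gt: "integral\<^sup>L Q Mx > Digamma a"
  using Bm_gt[of 1 1] Bm_11 by simp

lemma Bm_lim: "(\<lambda>n. Bm 1 (inverse (real (Suc n)))) \<longlonglongrightarrow> Digamma a"
proof -
  have "(\<lambda>n. integral\<^sup>L Q (w 1 (inverse (real (Suc n))))) \<longlonglongrightarrow> integral\<^sup>L Q (\<lambda>p. ln (fst p))"
  proof (rule integral_dominated_convergence[where w="\<lambda>p. \<bar>ln (fst p)\<bar> + \<bar>ln (snd p)\<bar>"])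
    show "(\<lambda>p. ln (fst p)) \<in> borel_measurable Q" by measurable
    show "w 1 (inverse (real (Suc n))) \<in> borel_measurable Q" for n by measurable
    show "integrable Q (\<lambda>p. \<bar>ln (fst p)\<bar> + \<bar>ln (snd p)\<bar>)"
      using lnfst_int lnsnd_int by (intro Bochner_Integration.integrable_add integrable_abs)
    show "AE p in Q. norm (w 1 (inverse (real (Suc n))) p) \<le> \<bar>ln (fst p)\<bar> + \<bar>ln (snd p)\<bar>" for n
      by (rule AE_I2) (auto simp: w_def)
    show "AE p in Q. (\<lambda>n. w 1 (inverse (real (Suc n))) p) \<longlonglongrightarrow> ln (fst p)"
      using AE_Q_pos
    proof eventually_elim
      case (elim p)
      have "(\<lambda>n. inverse (real (Suc n)) * snd p) \<longlonglongrightarrow> 0 * snd p"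
        by (intro tendsto_mult LIMSEQ_inverse_real_of_nat tendsto_const)
      then have "eventually (\<lambda>n. inverse (real (Suc n)) * snd p < fst p) sequentially"
        using elim by (intro order_tendstoD(2)) auto
      then have "eventually (\<lambda>n. w 1 (inverse (real (Suc n))) p = ln (fst p)) sequentially"
        by eventually_elim (simp add: w_def)
      then show ?case by (rule tendsto_eventually)
    qed
  qed
  then show ?thesis by (simp add: Bm_def lnfst_integral)
qed

end

context gm begin

lemma G_measure: "G_std a z = measure D {..z}"
proof -
  have int: "integrable lborel (\<lambda>t. g t * indicator {..z} t)"
    by (rule integrable_real_mult_indicator) (simp_all add: g_int)
  have "emeasure D {..z} = (\<integral>\<^sup>+t. ennreal (g t * indicator {..z} t) \<partial>lborel)"
    by (subst emeasure_D) (auto intro!: nn_integral_cong simp: indicator_def)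
  also have "\<dots> = ennreal (\<integral>t. g t * indicator {..z} t \<partial>lborel)"
    by (rule nn_integral_eq_integral[OF int]) (simp add: g_nonneg)
  finally have "measure D {..z} = (\<integral>t. g t * indicator {..z} t \<partial>lborel)"
    by (simp add: measure_def integral_nonneg_AE g_nonneg)
  also have "\<dots> = G_std a z"
    unfolding G_std_def set_lebesgue_integral_def by (simp add: mult.commute)
  finally show ?thesis ..
qed

lemma G_measure': "G_std a z = measure D {..<z}"
proof -
  interpret prob_space D by (rule prob_D)
  have "measure D {..z} = measure D ({..<z} \<union> {z})" by (simp add: ivl_disj_un(2)[symmetric] Un_commute)
  also have "\<dots> = measure D {..<z} + measure D {z}"
    by (rule finite_measure_Union) auto
  also have "measure D {z} = 0" using D_singleton by (simp add: measure_def)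
  finally show ?thesis by (simp add: G_measure)
qed

lemma G_mono: "mono (G_std a)"
proof -
  interpret prob_space D by (rule prob_D)
  show ?thesis unfolding mono_def G_measure
    by (intro allI impI finite_measure_mono) auto
qed

lemma G_meas[measurable]: "G_std a \<in> borel_measurable borel"
  by (rule borel_measurable_mono[OF G_mono])

lemma G_bounds: "0 \<le> G_std a z" "G_std a z \<le> 1"
proof -
  interpret prob_space D by (rule prob_D)
  show "0 \<le> G_std a z" "G_std a z \<le> 1" unfolding G_measure by simp_all
qed

lemma Mx_c2: "integral\<^sup>L Q Mx = c2 a"
proof -
  interpret pair_prob_space D D by (rule pairQ)
  define f1 where "f1 x y = ln x * indicator {..x} y" for x y :: real
  define f2 where "f2 x y = ln y * indicator {..<y} x" for x y :: real
  have "case_prod f1 = (\<lambda>p. if snd p \<le> fst p then ln (fst p) else 0)"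
    by (auto simp: f1_def fun_eq_iff indicator_def)
  moreover have "(\<lambda>p::real\<times>real. if snd p \<le> fst p then ln (fst p) else 0) \<in> borel_measurable (borel \<Otimes>\<^sub>M borel)"
    by measurable
  ultimately have [measurable]: "case_prod f1 \<in> borel_measurable (borel \<Otimes>\<^sub>M borel)" by simp
  have "case_prod f2 = (\<lambda>p. if fst p < snd p then ln (snd p) else 0)"
    by (auto simp: f2_def fun_eq_iff indicator_def)
  moreover have "(\<lambda>p::real\<times>real. if fst p < snd p then ln (snd p) else 0) \<in> borel_measurable (borel \<Otimes>\<^sub>M borel)"
    by measurable
  ultimately have [measurable]: "case_prod f2 \<in> borel_measurable (borel \<Otimes>\<^sub>M borel)" by simp
  have i1: "integrable Q (case_prod f1)"
  proof (rule Bochner_Integration.integrable_bound)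
    show "integrable Q (\<lambda>p. \<bar>ln (fst p)\<bar>)" using lnfst_int by (rule integrable_abs)
    show "case_prod f1 \<in> borel_measurable Q" by measurable
    show "AE p in Q. norm (case_prod f1 p) \<le> norm \<bar>ln (fst p)\<bar>"
      by (rule AE_I2) (auto simp: f1_def indicator_def)
  qed
  have i2: "integrable Q (case_prod f2)"
  proof (rule Bochner_Integration.integrable_bound)
    show "integrable Q (\<lambda>p. \<bar>ln (snd p)\<bar>)" using lnsnd_int by (rule integrable_abs)
    show "case_prod f2 \<in> borel_measurable Q" by measurable
    show "AE p in Q. norm (case_prod f2 p) \<le> norm \<bar>ln (snd p)\<bar>"
      by (rule AE_I2) (auto simp: f2_def indicator_def)
  qed
  have e1: "integral\<^sup>L Q (case_prod f1) = (\<integral>x. ln x * G_std a x \<partial>D)"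
  proof -
    have "integral\<^sup>L Q (case_prod f1) = (\<integral>x. (\<integral>y. f1 x y \<partial>D) \<partial>D)"
      using integral_fst[OF i1] by simp
    also have "\<dots> = (\<integral>x. ln x * G_std a x \<partial>D)"
      by (intro Bochner_Integration.integral_cong refl) (simp add: f1_def G_measure)
    finally show ?thesis .
  qed
  have e2: "integral\<^sup>L Q (case_prod f2) = (\<integral>x. ln x * G_std a x \<partial>D)"
  proof -
    have "integral\<^sup>L Q (case_prod f2) = (\<integral>y. (\<integral>x. f2 x y \<partial>D) \<partial>D)"
      using integral_snd[OF i2] by simp
    also have "\<dots> = (\<integral>x. ln x * G_std a x \<partial>D)"
      by (intro Bochner_Integration.integral_cong refl) (simp add: f2_def G_measure' mult.commute)
    finally show ?thesis .
  qed
  have "integral\<^sup>L Q Mx = integral\<^sup>L Q (\<lambda>p. case_prod f1 p + case_prod f2 p)"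
  proof (rule integral_cong_AE)
    show "AE p in Q. Mx p = case_prod f1 p + case_prod f2 p" using AE_Q_pos
      by eventually_elim (auto simp: Mx_def f1_def f2_def max_def indicator_def)
  qed simp_all
  also have "\<dots> = 2 * (\<integral>x. ln x * G_std a x \<partial>D)"
    using i1 i2 e1 e2 by simp
  also have "(\<integral>x. ln x * G_std a x \<partial>D) = (LINT z:{0<..}|lborel. ln z * G_std a z * g z)"
  proof -
    have "(\<integral>x. ln x * G_std a x \<partial>D) = (\<integral>z. g z * (ln z * G_std a z) \<partial>lborel)"
      by (rule integral_D) measurable
    also have "\<dots> = (LINT z:{0<..}|lborel. ln z * G_std a z * g z)"
      unfolding set_lebesgue_integral_def
      by (intro Bochner_Integration.integral_cong refl) (auto simp: indicator_def g_zero)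
    finally show ?thesis .
  qed
  finally show ?thesis by (simp add: c2_def)
qed

end

context gm begin

lemma Q_density: "Q = density (lborel \<Otimes>\<^sub>M lborel) (\<lambda>(x, y). ennreal (g x) * ennreal (g y))"
  unfolding D_def
  by (rule pair_measure_density)
     (simp_all add: lborel.sigma_finite_measure_axioms prob_space_imp_sigma_finite prob_D[unfolded D_def])

definition phi :: "real \<Rightarrow> real \<Rightarrow> real" where
  "phi x u = (if x > 0 then x * g x * g (x * u) else 0)"

definition kk :: "real \<Rightarrow> real" where
  "kk u = (if u > 0 then u powr (a - 1) * (1 + u) powr (- 2 * a) / (Gamma a)\<^sup>2 else 0)"

lemma phi_meas[measurable]: "case_prod phi \<in> borel_measurable (borel \<Otimes>\<^sub>M borel)"
  unfolding phi_def by measurable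

lemma kk_meas[measurable]: "kk \<in> borel_measurable borel"
  unfolding kk_def by measurable

lemma phi_nonneg: "phi x u \<ge> 0"
  unfolding phi_def by (simp add: g_nonneg)

lemma kk_nonneg: "kk u \<ge> 0"
  unfolding kk_def by simp

lemma inner1:
  assumes hm[measurable]: "h \<in> borel_measurable borel"
  shows "(\<integral>\<^sup>+y. ennreal (g x) * ennreal (g y) * h (x + y) \<partial>lborel) =
         (\<integral>\<^sup>+u. ennreal (phi x u) * h (x + x * u) \<partial>lborel)"
proof (cases "x > 0")
  case True
  have "(\<integral>\<^sup>+y. ennreal (g x) * ennreal (g y) * h (x + y) \<partial>lborel) =
        ennreal \<bar>x\<bar> * (\<integral>\<^sup>+u. ennreal (g x) * ennreal (g (0 + x * u)) * h (x + (0 + x * u)) \<partial>lborel)"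
    using True by (intro nn_integral_real_affine) auto
  also have "\<dots> = (\<integral>\<^sup>+u. ennreal \<bar>x\<bar> * (ennreal (g x) * ennreal (g (x * u)) * h (x + x * u)) \<partial>lborel)"
    by (subst nn_integral_cmult) auto
  also have "\<dots> = (\<integral>\<^sup>+u. ennreal (phi x u) * h (x + x * u) \<partial>lborel)"
  proof (intro nn_integral_cong)
    fix u :: real
    have "ennreal \<bar>x\<bar> * (ennreal (g x) * ennreal (g (x * u))) = ennreal (phi x u)"
      using True by (simp add: phi_def ennreal_mult[symmetric] g_nonneg mult.assoc)
    then show "ennreal \<bar>x\<bar> * (ennreal (g x) * ennreal (g (x * u)) * h (x + x * u)) =
          ennreal (phi x u) * h (x + x * u)"
      by (simp add: mult.assoc[symmetric])
  qed
  finally show ?thesis .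
next
  case False
  then show ?thesis by (simp add: phi_def g_zero)
qed

lemma inner2:
  assumes hm[measurable]: "h \<in> borel_measurable borel"
  shows "(\<integral>\<^sup>+x. ennreal (phi x u) * h (x + x * u) \<partial>lborel) =
         ennreal (kk u) * (\<integral>\<^sup>+z. h z * ennreal (kf (2 * a) z) \<partial>lborel)"
proof (cases "u > 0")
  case True
  define c where "c = 1 / (1 + u)"
  have c: "c > 0" "c \<noteq> 0" using True by (auto simp: c_def)
  have "(\<integral>\<^sup>+x. ennreal (phi x u) * h (x + x * u) \<partial>lborel) =
        ennreal \<bar>c\<bar> * (\<integral>\<^sup>+z. ennreal (phi (0 + c * z) u) * h ((0 + c * z) + (0 + c * z) * u) \<partial>lborel)"
    using c by (intro nn_integral_real_affine) auto
  also have "\<dots> = (\<integral>\<^sup>+z. ennreal \<bar>c\<bar> * (ennreal (phi (c * z) u) * h (c * z + c * z * u)) \<partial>lborel)"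
    by (subst nn_integral_cmult) auto
  also have "\<dots> = (\<integral>\<^sup>+z. ennreal (kk u) * (h z * ennreal (kf (2 * a) z)) \<partial>lborel)"
  proof (intro nn_integral_cong)
    fix z :: real
    have c1: "c * (1 + u) = 1" using True by (simp add: c_def)
    have "c * z + c * z * u = z * (c * (1 + u))" by (simp add: algebra_simps)
    then have hz: "c * z + c * z * u = z" using c1 by simp
    have key: "\<bar>c\<bar> * phi (c * z) u = kk u * kf (2 * a) z"
    proof (cases "z > 0")
      case zp: True
      have cz: "c * z > 0" using c zp by simp
      have "\<bar>c\<bar> * phi (c * z) u = c * (c * z) * g (c * z) * g (c * z * u)"
        using c cz by (simp add: phi_def)
      also have "\<dots> = c * (c * z) * ((c * z) powr (a - 1) * exp (- (c * z)) / Gamma a)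
                       * ((c * z * u) powr (a - 1) * exp (- (c * z * u)) / Gamma a)"
        using cz True by (simp add: g_std_kf kf_def)
      also have "\<dots> = (c * c * z * (c * z) powr (a - 1) * (c * z * u) powr (a - 1)) * 
                       (exp (- (c * z)) * exp (- (c * z * u))) / (Gamma a)\<^sup>2"
        by (simp add: power2_eq_square)
      also have "exp (- (c * z)) * exp (- (c * z * u)) = exp (- z)"
        using hz by (simp add: exp_add[symmetric] algebra_simps)
      also have "c * c * z * (c * z) powr (a - 1) * (c * z * u) powr (a - 1) = 
                 z powr (2 * a - 1) * (u powr (a - 1) * (1 + u) powr (- 2 * a))"
      proof -
        have cu: "c = (1 + u) powr (-1)" using True by (simp add: c_def powr_minus divide_inverse)
        have "c * c * z * (c * z) powr (a - 1) * (c * z * u) powr (a - 1) =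
              (c * c * c powr (a - 1) * c powr (a - 1)) * (z * z powr (a - 1) * z powr (a - 1)) * u powr (a - 1)"
          using c zp True by (simp add: powr_mult mult_ac)
        also have "c * c * c powr (a - 1) * c powr (a - 1) = c powr (2 * a)"
        proof -
          have E1: "c * c powr (a - 1) = c powr a" using c by (simp add: powr_mult_base)
          have "c * c * c powr (a - 1) * c powr (a - 1) = (c * c powr (a - 1)) * (c * c powr (a - 1))"
            by (simp add: mult_ac)
          also have "\<dots> = c powr (a + a)" unfolding E1 by (simp only: powr_add)
          finally show ?thesis by simp
        qed
        also have "z * z powr (a - 1) * z powr (a - 1) = z powr (2 * a - 1)"
        proof -
          have E1: "z * z powr (a - 1) = z powr a" using zp by (simp add: powr_mult_base)
          have "z * z powr (a - 1) * z powr (a - 1) = z powr (a + (a - 1))" 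
            unfolding E1 by (simp only: powr_add)
          then show ?thesis by (simp add: algebra_simps)
        qed
        also have "c powr (2 * a) = (1 + u) powr (- 2 * a)"
          using True by (simp add: c_def powr_divide powr_minus_divide)
        finally show ?thesis by (simp add: mult_ac)
      qed
      finally show ?thesis
        using zp True by (simp add: kk_def kf_def)
    next
      case False
      then have "\<not> c * z > 0" using c by (simp add: zero_less_mult_iff)
      then show ?thesis using False by (simp add: phi_def kf_def)
    qed
    have "ennreal \<bar>c\<bar> * ennreal (phi (c * z) u) = ennreal (kk u) * ennreal (kf (2 * a) z)"
      using key by (simp add: ennreal_mult[symmetric] phi_nonneg kk_nonneg kf_nonneg)
    then show "ennreal \<bar>c\<bar> * (ennreal (phi (c * z) u) * h (c * z + c * z * u)) =
          ennreal (kk u) * (h z * ennreal (kf (2 * a) z))"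
      using hz by (simp add: mult_ac)
  qed
  also have "\<dots> = ennreal (kk u) * (\<integral>\<^sup>+z. h z * ennreal (kf (2 * a) z) \<partial>lborel)"
    by (rule nn_integral_cmult) simp
  finally show ?thesis .
next
  case False
  have "phi x u = 0" for x
    using False by (auto simp: phi_def g_zero mult_nonneg_nonpos)
  then show ?thesis using False by (simp add: kk_def)
qed

definition K where "K = (\<integral>\<^sup>+u. ennreal (kk u) \<partial>lborel)"

lemma conv_nn:
  assumes hm[measurable]: "h \<in> borel_measurable borel"
  shows "(\<integral>\<^sup>+p. h (fst p + snd p) \<partial>Q) = K * (\<integral>\<^sup>+z. h z * ennreal (kf (2 * a) z) \<partial>lborel)"
proof -
  have L: "pair_sigma_finite lborel lborel" ..
  have "(\<integral>\<^sup>+p. h (fst p + snd p) \<partial>Q) =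
        (\<integral>\<^sup>+p. (case p of (x, y) \<Rightarrow> ennreal (g x) * ennreal (g y)) * h (fst p + snd p) \<partial>(lborel \<Otimes>\<^sub>M lborel))"
    by (subst Q_density, subst nn_integral_density) auto
  also have "\<dots> = (\<integral>\<^sup>+x. \<integral>\<^sup>+y. ennreal (g x) * ennreal (g y) * h (x + y) \<partial>lborel \<partial>lborel)"
    by (subst lborel.nn_integral_fst[symmetric]) (auto simp: case_prod_beta)
  also have "\<dots> = (\<integral>\<^sup>+x. \<integral>\<^sup>+u. ennreal (phi x u) * h (x + x * u) \<partial>lborel \<partial>lborel)"
    by (simp add: inner1)
  also have "\<dots> = (\<integral>\<^sup>+u. \<integral>\<^sup>+x. ennreal (phi x u) * h (x + x * u) \<partial>lborel \<partial>lborel)"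
    by (rule pair_sigma_finite.Fubini'[OF L, symmetric]) measurable
  also have "\<dots> = (\<integral>\<^sup>+u. ennreal (kk u) * (\<integral>\<^sup>+z. h z * ennreal (kf (2 * a) z) \<partial>lborel) \<partial>lborel)"
    by (simp add: inner2)
  also have "\<dots> = K * (\<integral>\<^sup>+z. h z * ennreal (kf (2 * a) z) \<partial>lborel)"
    unfolding K_def by (rule nn_integral_multc) simp
  finally show ?thesis .
qed

end

context gm begin

lemma kf2_nn: "(\<integral>\<^sup>+z. ennreal (kf (2 * a) z) \<partial>lborel) = ennreal (Gamma (2 * a))"
  using nn_integral_eq_integral[OF kf_int[of "2 * a"]] kf_integral[of "2 * a"] a_pos
  by (simp add: kf_nonneg)

lemma K_val: "K = ennreal (1 / Gamma (2 * a))"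
proof -
  interpret prob_space Q by (rule probQ)
  have G: "Gamma (2 * a) > 0" using Gamma_real_pos[of "2 * a"] a_pos by simp
  have "(\<integral>\<^sup>+p. (1::ennreal) \<partial>Q) = 1"
    using emeasure_space_1 by simp
  moreover have "(\<integral>\<^sup>+p. (\<lambda>_. 1::ennreal) (fst p + snd p) \<partial>Q) = K * ennreal (Gamma (2 * a))"
    by (subst conv_nn) (simp_all add: kf2_nn)
  ultimately have KG: "K * ennreal (Gamma (2 * a)) = 1" by simp
  have "K = K * (ennreal (Gamma (2 * a)) * ennreal (1 / Gamma (2 * a)))"
    using G by (simp add: ennreal_mult[symmetric])
  also have "\<dots> = ennreal (1 / Gamma (2 * a))"
    by (simp add: mult.assoc[symmetric] KG)
  finally show ?thesis .
qed

lemma lnsum: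
  shows "integrable Q (\<lambda>p. ln (fst p + snd p))"
    and "integral\<^sup>L Q (\<lambda>p. ln (fst p + snd p)) = Digamma (2 * a)"
proof -
  define b where "b = 2 * a"
  have b: "b > 0" using a_pos by (simp add: b_def)
  have G: "Gamma b > 0" using Gamma_real_pos[OF b] .
  have Kb: "K = ennreal (1 / Gamma b)" using K_val by (simp add: b_def)
  have c1: "(\<integral>\<^sup>+p. ennreal (f (fst p + snd p)) \<partial>Q) = K * (\<integral>\<^sup>+z. ennreal (f z * kf b z) \<partial>lborel)"
    if [measurable]: "f \<in> borel_measurable borel" for f
  proof -
    have "(\<integral>\<^sup>+p. (\<lambda>z. ennreal (f z)) (fst p + snd p) \<partial>Q) = 
          K * (\<integral>\<^sup>+z. ennreal (f z) * ennreal (kf (2 * a) z) \<partial>lborel)"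
      by (rule conv_nn) measurable
    then show ?thesis by (simp add: b_def ennreal_mult''[symmetric] kf_nonneg)
  qed
  have li: "integrable lborel (\<lambda>z. ln z * kf b z)" using ln_kf_int[OF b] .
  show int: "integrable Q (\<lambda>p. ln (fst p + snd p))"
  proof (subst integrable_iff_bounded, intro conjI)
    show "(\<lambda>p. ln (fst p + snd p)) \<in> borel_measurable Q" by measurable
    have "(\<integral>\<^sup>+p. ennreal (norm (ln (fst p + snd p))) \<partial>Q) = 
          K * (\<integral>\<^sup>+z. ennreal (\<bar>ln z\<bar> * kf b z) \<partial>lborel)"
      using c1[of "\<lambda>z. \<bar>ln z\<bar>"] by simp
    also have "(\<integral>\<^sup>+z. ennreal (\<bar>ln z\<bar> * kf b z) \<partial>lborel) = ennreal (\<integral>z. \<bar>ln z\<bar> * kf b z \<partial>lborel)"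
    proof (rule nn_integral_eq_integral)
      have "integrable lborel (\<lambda>z. \<bar>ln z * kf b z\<bar>)" using li by (rule integrable_abs)
      then show "integrable lborel (\<lambda>z. \<bar>ln z\<bar> * kf b z)"
        by (simp add: abs_mult kf_nonneg)
    qed (simp add: kf_nonneg)
    finally show "(\<integral>\<^sup>+p. ennreal (norm (ln (fst p + snd p))) \<partial>Q) < \<infinity>"
      by (simp add: Kb ennreal_mult_less_top)
  qed
  have "integral\<^sup>L Q (\<lambda>p. ln (fst p + snd p)) =
        enn2real (\<integral>\<^sup>+p. ennreal (ln (fst p + snd p)) \<partial>Q) - enn2real (\<integral>\<^sup>+p. ennreal (- ln (fst p + snd p)) \<partial>Q)"
    by (rule real_lebesgue_integral_def[OF int])
  also have "\<dots> = enn2real (K * (\<integral>\<^sup>+z. ennreal (ln z * kf b z) \<partial>lborel)) -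
                  enn2real (K * (\<integral>\<^sup>+z. ennreal (- (ln z * kf b z)) \<partial>lborel))"
    using c1[of ln] c1[of "\<lambda>z. - ln z"] by simp
  also have "\<dots> = (1 / Gamma b) * (enn2real (\<integral>\<^sup>+z. ennreal (ln z * kf b z) \<partial>lborel) -
                  enn2real (\<integral>\<^sup>+z. ennreal (- (ln z * kf b z)) \<partial>lborel))"
    using G by (simp add: Kb enn2real_mult right_diff_distrib)
  also have "enn2real (\<integral>\<^sup>+z. ennreal (ln z * kf b z) \<partial>lborel) -
             enn2real (\<integral>\<^sup>+z. ennreal (- (ln z * kf b z)) \<partial>lborel) = Gamma b * Digamma b"
    using real_lebesgue_integral_def[OF li] ln_kf_integral[OF b] by simp
  finally show "integral\<^sup>L Q (\<lambda>p. ln (fst p + snd p)) = Digamma (2 * a)"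
    using G by (simp add: b_def)
qed

lemma Mx_lt: "integral\<^sup>L Q Mx < Digamma (2 * a)"
proof -
  let ?f = "\<lambda>p. ln (fst p + snd p) - Mx p"
  have "integral\<^sup>L Q ?f > 0"
  proof (rule int_pos_box[where la=0 and ua=1 and lb=0 and ub=1])
    show "integrable Q ?f" using lnsum(1) Mx_int by (rule Bochner_Integration.integrable_diff)
    show "AE p in Q. ?f p \<ge> 0" using AE_Q_pos
      by eventually_elim (auto simp: Mx_def max_def)
    fix x y :: real assume "0 < x" "x < 1" "0 < y" "y < 1"
    then show "?f (x, y) > 0" by (auto simp: Mx_def max_def)
  qed simp_all
  then show ?thesis
    using lnsum by (simp add: Bochner_Integration.integral_diff[OF lnsum(1) Mx_int])
qed

end

context gm begin

lemma c2_bounds: "Digamma a < c2 a" "c2 a < Digamma (2 * a)"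
  using Mx_gt Mx_lt Mx_c2 by simp_all

lemma beta0_props:
  shows "0 < beta0 a" "beta0 a < a" "Digamma (a + beta0 a) = c2 a"
proof -
  have cont: "continuous_on {a..2*a} Digamma"
    by (rule continuous_on_Polygamma) (use a_pos in \<open>auto dest: nonpos_Ints_nonpos\<close>)
  obtain x where x: "a \<le> x" "x \<le> 2 * a" "Digamma x = c2 a"
    using IVT'[of Digamma a "c2 a" "2 * a", OF _ _ _ cont] c2_bounds a_pos by auto
  have xa: "x \<noteq> a" using x c2_bounds by auto
  have x2a: "x \<noteq> 2 * a" using x c2_bounds by auto
  have unique: "y = x" if "y > 0" "Digamma y = c2 a" for y
  proof (rule ccontr)
    assume "y \<noteq> x"
    then have "y < x \<or> x < y" by auto
    then show False
      using Digamma_real_strict_mono[of y x] Digamma_real_strict_mono[of x y] that x a_pos by auto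
  qed
  have "Digamma_inv (c2 a) = x"
    unfolding Digamma_inv_def
  proof (rule the_equality)
    show "x > 0 \<and> Digamma x = c2 a" using x a_pos by auto
  qed (use unique in blast)
  then have b: "beta0 a = x - a" by (simp add: beta0_def)
  show "0 < beta0 a" "beta0 a < a" "Digamma (a + beta0 a) = c2 a"
    using b x xa x2a by auto
qed

lemma risk_le_iff:
  assumes "t1 > 0" "t2 > 0"
  shows "risk a t1 t2 (delta u) \<le> risk a t1 t2 (delta v) \<longleftrightarrow> R t1 t2 u \<le> R t1 t2 v"
  using assms by (simp add: risk_R R_nonneg)

lemma risk_less_iff:
  assumes "t1 > 0" "t2 > 0"
  shows "risk a t1 t2 (delta u) < risk a t1 t2 (delta v) \<longleftrightarrow> R t1 t2 u < R t1 t2 v"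
  using assms by (simp add: risk_R R_nonneg ennreal_less_iff)

lemma dom_strict:
  assumes "\<And>t1 t2. t1 > 0 \<Longrightarrow> t2 > 0 \<Longrightarrow> R t1 t2 u < R t1 t2 v"
  shows "dominates a (delta u) (delta v)"
  unfolding dominates_def
proof (intro conjI)
  show "\<forall>\<theta>1>0. \<forall>\<theta>2>0. risk a \<theta>1 \<theta>2 (delta u) \<le> risk a \<theta>1 \<theta>2 (delta v)"
    using assms by (auto simp: risk_le_iff less_imp_le)
  show "\<exists>\<theta>1>0. \<exists>\<theta>2>0. risk a \<theta>1 \<theta>2 (delta u) < risk a \<theta>1 \<theta>2 (delta v)"
  proof (intro exI[of _ "1::real"] conjI)
    show "risk a 1 1 (delta u) < risk a 1 1 (delta v)"
      using assms[of 1 1] by (simp add: risk_less_iff)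
  qed simp_all
qed

lemma dom_by_psi:
  assumes "c < Digamma a"
  shows "dominates a (delta (Digamma a)) (delta c)"
proof (rule dom_strict)
  fix t1 t2 :: real assume "t1 > 0" "t2 > 0"
  then have B: "Bm t1 t2 > Digamma a" by (rule Bm_gt)
  have "R t1 t2 (Digamma a) - R t1 t2 c < 0"
    unfolding R_diff using assms B by (intro mult_pos_neg) auto
  then show "R t1 t2 (Digamma a) < R t1 t2 c" by simp
qed

lemma dom_by_c2:
  assumes "c > c2 a"
  shows "dominates a (delta (c2 a)) (delta c)"
proof (rule dom_strict)
  fix t1 t2 :: real assume "t1 > 0" "t2 > 0"
  have B: "Bm t1 t2 \<le> c2 a" using Bm_le Mx_c2 by simp
  have "R t1 t2 (c2 a) - R t1 t2 c < 0"
    unfolding R_diff using assms B by (intro mult_neg_pos) auto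
  then show "R t1 t2 (c2 a) < R t1 t2 c" by simp
qed

lemma delta_meas: "(\<lambda>p. delta c (fst p) (snd p)) \<in> borel_measurable (lborel \<Otimes>\<^sub>M lborel)"
  unfolding delta_def by measurable

lemma inadm_of_dom: "dominates a (delta u) (delta v) \<Longrightarrow> inadmissible a (delta v)"
  unfolding inadmissible_def using delta_meas by blast

lemma admissible:
  assumes "Digamma a \<le> c" "c \<le> c2 a"
  shows "admissible_K1 a (delta c)"
  unfolding admissible_K1_def
proof
  assume "\<exists>c'. dominates a (delta c') (delta c)"
  then obtain c' where d: "dominates a (delta c') (delta c)" by blast
  have le: "R t1 t2 c' \<le> R t1 t2 c" if "t1 > 0" "t2 > 0" for t1 t2
    using d that by (auto simp: dominates_def risk_le_iff)
  obtain s1 s2 where s: "s1 > 0" "s2 > 0" "R s1 s2 c' < R s1 s2 c"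
    using d by (auto simp: dominates_def risk_less_iff)
  consider "c' = c" | "c' < c" | "c' > c" by linarith
  then show False
  proof cases
    case 1 then show False using s by simp
  next
    case 2
    have B: "Bm 1 1 = c2 a" using Bm_11 Mx_c2 by simp
    have "R 1 1 c' - R 1 1 c > 0"
      unfolding R_diff B using 2 assms by (intro mult_neg_neg) auto
    then show False using le[of 1 1] by simp
  next
    case 3
    have "Digamma a < (c + c') / 2" using 3 assms by simp
    then have "eventually (\<lambda>n. Bm 1 (inverse (real (Suc n))) < (c + c') / 2) sequentially"
      by (rule order_tendstoD(2)[OF Bm_lim])
    then obtain n where n: "Bm 1 (inverse (real (Suc n))) < (c + c') / 2"
      by (auto simp: eventually_sequentially)
    let ?t = "inverse (real (Suc n))"
    have "R 1 ?t c' - R 1 ?t c > 0"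
      unfolding R_diff using 3 n by (intro mult_pos_pos) auto
    then show False using le[of 1 ?t] by simp
  qed
qed

end

theorem corollary2p2:
  fixes \<alpha> :: real
  assumes "\<alpha> > 0"
  shows "0 < beta0 \<alpha> \<and> beta0 \<alpha> < \<alpha>
    \<and> (\<forall>\<beta>. 0 \<le> \<beta> \<and> \<beta> \<le> beta0 \<alpha> \<longrightarrow> admissible_K1 \<alpha> (delta (Digamma (\<alpha> + \<beta>))))
    \<and> (\<forall>\<beta>. (- \<alpha> < \<beta> \<and> \<beta> < 0) \<or> beta0 \<alpha> < \<beta> \<longrightarrow> inadmissible \<alpha> (delta (Digamma (\<alpha> + \<beta>))))
    \<and> (\<forall>\<beta>. - \<alpha> < \<beta> \<and> \<beta> < 0 \<longrightarrow> dominates \<alpha> (delta (Digamma \<alpha>)) (delta (Digamma (\<alpha> + \<beta>))))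
    \<and> (\<forall>\<beta>. beta0 \<alpha> < \<beta> \<longrightarrow> dominates \<alpha> (delta (c2 \<alpha>)) (delta (Digamma (\<alpha> + \<beta>))))"
proof -
  interpret gm \<alpha> using assms by unfold_locales
  note b0 = beta0_props
  have D1: "dominates \<alpha> (delta (Digamma \<alpha>)) (delta (Digamma (\<alpha> + \<beta>)))"
    if "- \<alpha> < \<beta>" "\<beta> < 0" for \<beta>
    using that by (intro dom_by_psi Digamma_real_strict_mono) auto
  have D2: "dominates \<alpha> (delta (c2 \<alpha>)) (delta (Digamma (\<alpha> + \<beta>)))"
    if "beta0 \<alpha> < \<beta>" for \<beta>
  proof (rule dom_by_c2)
    have "Digamma (\<alpha> + beta0 \<alpha>) < Digamma (\<alpha> + \<beta>)"
      using that b0 assms by (intro Digamma_real_strict_mono) auto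
    then show "c2 \<alpha> < Digamma (\<alpha> + \<beta>)" using b0 by simp
  qed
  have A: "admissible_K1 \<alpha> (delta (Digamma (\<alpha> + \<beta>)))"
    if "0 \<le> \<beta>" "\<beta> \<le> beta0 \<alpha>" for \<beta>
  proof (rule admissible)
    show "Digamma \<alpha> \<le> Digamma (\<alpha> + \<beta>)" using that assms by (intro Digamma_real_mono) auto
    have "Digamma (\<alpha> + \<beta>) \<le> Digamma (\<alpha> + beta0 \<alpha>)"
      using that assms by (intro Digamma_real_mono) auto
    then show "Digamma (\<alpha> + \<beta>) \<le> c2 \<alpha>" using b0 by simp
  qed
  show ?thesis
    using b0 D1 D2 A inadm_of_dom by blast
qed

end
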